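(* Let $S$ be a string of length $n$ over a totally ordered alphabet, let $i\in[1,n]$ and $j=\mathrm{nss}[i]\ne n+1$. If $\mathrm{rlce}(i,j)\ge j-i$, then $\mathrm{rlce}(j,j+(j-i))=\mathrm{rlce}(i,j)-(j-i)$ and $\mathrm{nss}[j]=j+(j-i)$.
   Context: For $i\in[1,n+1]$, $S_i=S[i..n]$ ($S_{n+1}$ is the empty string); $\prec$ is the induced lexicographical order. $\mathrm{nss}[i]=\min\{j \mid j=n+1 \text{ or } (j\in(i,n] \text{ and } S_i\succ S_j)\}$ for $i\in[1,n]$. $\mathrm{rlce}(a,b)$ is the length of the longest common prefix of $S_a$ and $S_b$. *)

theory Defs
  imports Main "HOL-Library.List_Lexorder"
begin

text \<open>Strings are lists over a linearly ordered alphabet; positions are 1-based.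
  The order on lists (List_Lexorder) is the lexicographic order in which a proper
  prefix is smaller.\<close>

definition suf :: "'a list \<Rightarrow> nat \<Rightarrow> 'a list" where
  "suf S i = drop (i - 1) S"

fun lcp :: "'a list \<Rightarrow> 'a list \<Rightarrow> nat" where
  "lcp (x # xs) (y # ys) = (if x = y then Suc (lcp xs ys) else 0)"
| "lcp _ _ = 0"

definition rlce :: "'a list \<Rightarrow> nat \<Rightarrow> nat \<Rightarrow> nat" where
  "rlce S a b = lcp (suf S a) (suf S b)"

definition nss :: "'a::linorder list \<Rightarrow> nat \<Rightarrow> nat" where
  "nss S i = (LEAST j. j = length S + 1 \<or>
                 (i < j \<and> j \<le> length S \<and> suf S j < suf S i))"

end

theory Submission
  imports Defs
begin

lemma lcp_le1: "lcp xs ys \<le> length xs"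
  by (induction xs ys rule: lcp.induct) auto

lemma lcp_le2: "lcp xs ys \<le> length ys"
  by (induction xs ys rule: lcp.induct) auto

lemma lcp_nth: "r < lcp xs ys \<Longrightarrow> xs ! r = ys ! r"
proof (induction xs ys arbitrary: r rule: lcp.induct)
  case (1 x xs y ys)
  then show ?case by (cases r) (auto split: if_splits)
qed auto

lemma lcp_mismatch: "lcp xs ys < length xs \<Longrightarrow> lcp xs ys < length ys \<Longrightarrow> xs ! lcp xs ys \<noteq> ys ! lcp xs ys"
  by (induction xs ys rule: lcp.induct) auto

lemma lcp_append: "lcp (p @ xs) (p @ ys) = length p + lcp xs ys"
  by (induction p) auto

lemma lcp_take: "n \<le> lcp xs ys \<Longrightarrow> take n xs = take n ys"
proof (induction xs ys arbitrary: n rule: lcp.induct)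
  case (1 x xs y ys)
  then show ?case by (cases n) (auto split: if_splits)
qed auto

lemma less_append_cancel: "((p @ xs) < (p @ ys)) = (xs < (ys :: 'a::linorder list))"
  by (induction p) auto

lemma less_by_nth:
  fixes xs ys :: "'a::linorder list"
  shows "q < length xs \<Longrightarrow> q < length ys \<Longrightarrow> \<forall>r<q. xs!r = ys!r \<Longrightarrow> xs!q < ys!q \<Longrightarrow> xs < ys"
proof (induction q arbitrary: xs ys)
  case 0
  then show ?case by (cases xs; cases ys) auto
next
  case (Suc q)
  obtain x xs' where xs: "xs = x # xs'" using Suc.prems(1) by (cases xs) auto
  obtain y ys' where ys: "ys = y # ys'" using Suc.prems(2) by (cases ys) auto
  have "x = y" using Suc.prems(3) xs ys by force
  moreover have "xs' < ys'"
  proof (rule Suc.IH)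
    show "\<forall>r<q. xs' ! r = ys' ! r" using Suc.prems(3) xs ys by force
  qed (use Suc.prems xs ys in auto)
  ultimately show ?case using xs ys by simp
qed

lemma suf_len: "length (suf S k) = length S - (k - 1)"
  by (simp add: suf_def)

lemma suf_nth: "1 \<le> k \<Longrightarrow> r < length (suf S k) \<Longrightarrow> suf S k ! r = S ! (k - 1 + r)"
  by (simp add: suf_def)

lemma suf_split: "1 \<le> k \<Longrightarrow> suf S k = take e (suf S k) @ suf S (k + e)"
proof -
  assume "1 \<le> k"
  hence "drop e (drop (k - 1) S) = drop (k + e - 1) S" by (simp add: add.commute)
  thus ?thesis unfolding suf_def by (metis append_take_drop_id)
qed

lemma nss_props:
  fixes S :: "'a::linorder list"
  assumes "j = nss S i" "j \<noteq> length S + 1"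
  shows "i < j \<and> j \<le> length S \<and> suf S j < suf S i
     \<and> (\<forall>k. i < k \<and> k < j \<longrightarrow> \<not> suf S k < suf S i)"
proof -
  let ?P = "\<lambda>j. j = length S + 1 \<or> (i < j \<and> j \<le> length S \<and> suf S j < suf S i)"
  have "?P (length S + 1)" by simp
  hence "?P j" unfolding assms nss_def by (rule LeastI)
  moreover have "\<not> ?P k" if "k < j" for k
    using not_less_Least[of k ?P] that unfolding assms nss_def by blast
  ultimately show ?thesis using assms(2) by auto
qed


theorem lemma10:
  fixes S :: "'a::linorder list" and i j :: nat
  assumes "1 \<le> i" and "i \<le> length S"
    and "j = nss S i" and "j \<noteq> length S + 1"
    and "rlce S i j \<ge> j - i"
  shows "rlce S j (j + (j - i)) = rlce S i j - (j - i)
         \<and> nss S j = j + (j - i)"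
proof -
  define n where "n = length S"
  define d where "d = j - i"
  define L where "L = rlce S i j"
  note np = nss_props[OF assms(3,4)]
  have ij: "i < j" "j \<le> n" and ji: "suf S j < suf S i"
    and mini: "\<And>k. i < k \<Longrightarrow> k < j \<Longrightarrow> \<not> suf S k < suf S i"
    using np n_def by auto
  have dL: "d \<le> L" using assms(5) d_def L_def by simp
  have Lj: "L \<le> n - (j - 1)" using lcp_le2[of "suf S i" "suf S j"] suf_len[of S j]
    unfolding L_def rlce_def n_def by simp
  have jd: "j + d \<le> n + 1" using dL Lj ij by linarith
  have d0: "0 < d" using ij d_def by simp
  define u where "u = take d (suf S i)"
  have Si: "suf S i = u @ suf S j" using suf_split[OF assms(1), of S d] ij
    unfolding u_def d_def by simp
  have tk: "take d (suf S i) = take d (suf S j)"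
    using lcp_take[of d "suf S i" "suf S j"] dL unfolding L_def rlce_def by simp
  have Sj: "suf S j = u @ suf S (j + d)" using suf_split[of j S d] ij assms(1) tk
    unfolding u_def by simp
  have lenu: "length u = d" using Lj dL ij suf_len[of S i] assms(1) unfolding u_def n_def by simp
  have c1: "L = d + rlce S j (j + d)"
    unfolding L_def rlce_def by (subst Si, subst Sj) (simp add: lcp_append lenu)
  have c2: "suf S (j + d) < suf S j"
    using ji less_append_cancel[of u "suf S (j + d)" "suf S j"] Si Sj by simp
  have ub: "lcp (suf S m) (suf S i) < j - m" if m: "i < m" "m < j" for m
  proof (rule ccontr)
    assume "\<not> ?thesis"
    hence ge: "j - m \<le> lcp (suf S m) (suf S i)" by simp
    define e where "e = j - m"
    have tk2: "take e (suf S m) = take e (suf S i)" using lcp_take ge e_def by blast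
    have Sm: "suf S m = take e (suf S m) @ suf S j"
      using suf_split[of m S e] m assms(1) e_def by simp
    have Si2: "suf S i = take e (suf S i) @ suf S (i + e)"
      using suf_split[of i S e] assms(1) by simp
    have "length (suf S m) \<noteq> length (suf S i)" using suf_len[of S] m ij n_def assms(1) by simp
    hence "suf S m \<noteq> suf S i" by metis
    hence "suf S i < suf S m" using mini[OF m] by auto
    hence a: "suf S (i + e) < suf S j"
      using less_append_cancel[of "take e (suf S i)" "suf S (i + e)" "suf S j"] Sm Si2 tk2 by simp
    have "\<not> suf S (i + e) < suf S i" using mini[of "i + e"] m e_def by simp
    hence "suf S i < suf S j" using a by auto
    thus False using ji by auto
  qed
  have nl: "\<not> suf S k < suf S j" if k: "j < k" "k < j + d" for k
  proof -
    define m where "m = k - d"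
    have m: "i < m" "m < j" "k = m + d" using k d_def ij m_def by auto
    define q where "q = lcp (suf S m) (suf S i)"
    have q1: "q < j - m" using ub[OF m(1,2)] q_def by simp
    have lm: "length (suf S m) = n - (m - 1)" "length (suf S i) = n - (i - 1)"
      "length (suf S k) = n - (k - 1)" "length (suf S j) = n - (j - 1)"
      using suf_len n_def by auto
    have qm: "q < length (suf S m)" "q < length (suf S i)" using q1 lm m ij by auto
    have neq: "suf S m ! q \<noteq> suf S i ! q" using lcp_mismatch qm q_def by metis
    have eqr: "\<forall>r<q. suf S m ! r = suf S i ! r" using lcp_nth q_def by metis
    have "\<not> suf S m ! q < suf S i ! q"
      using less_by_nth[OF qm eqr] mini[OF m(1,2)] by blast
    hence gt: "suf S i ! q < suf S m ! q" using neq by auto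
    have per: "S ! (i - 1 + t) = S ! (j - 1 + t)" if "t < L" for t
    proof -
      have t1: "t < length (suf S i)" using that lcp_le1[of "suf S i" "suf S j"]
        unfolding L_def rlce_def by linarith
      have t2: "t < length (suf S j)" using that lcp_le2[of "suf S i" "suf S j"]
        unfolding L_def rlce_def by linarith
      have "suf S i ! t = suf S j ! t" using lcp_nth[of t "suf S i" "suf S j"] that
        unfolding L_def rlce_def by simp
      moreover have "suf S i ! t = S ! (i - 1 + t)" using suf_nth[OF assms(1) t1] .
      moreover have "1 \<le> j" using ij assms(1) by linarith
      hence "suf S j ! t = S ! (j - 1 + t)" using suf_nth[OF _ t2] by blast
      ultimately show ?thesis by simp
    qed
    have qk1: "q < length (suf S k)"
    proof -
      have "k + q < n + 1" using q1 m jd by linarith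
      thus ?thesis using lm(3) m(3) d0 by linarith
    qed
    have qk2: "q < length (suf S j)"
    proof -
      have "q < d" using q1 m ij d_def by linarith
      thus ?thesis using lm(4) dL Lj by linarith
    qed
    note qk = qk1 qk2
    have r1: "suf S k ! r = suf S m ! r" if "r \<le> q" for r
    proof -
      have "m - i + r < L" using that q1 dL d_def m ij by linarith
      hence "S ! (i - 1 + (m - i + r)) = S ! (j - 1 + (m - i + r))" by (rule per)
      moreover have "i - 1 + (m - i + r) = m - 1 + r" "j - 1 + (m - i + r) = k - 1 + r"
        using m ij assms(1) d_def by auto
      moreover have "r < length (suf S k)" using that qk by linarith
      moreover have "r < length (suf S m)" using that qm by linarith
      moreover have "1 \<le> k" "1 \<le> m" using m assms(1) by linarith+
      ultimately show ?thesis using suf_nth by metis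
    qed
    have r2: "suf S j ! r = suf S i ! r" if "r \<le> q" for r
    proof -
      have "r < L" using that q1 dL d_def m ij by linarith
      hence "S ! (i - 1 + r) = S ! (j - 1 + r)" by (rule per)
      moreover have "r < length (suf S j)" using that qk by linarith
      moreover have "r < length (suf S i)" using that qm by linarith
      moreover have "1 \<le> j" using ij assms(1) by linarith
      ultimately show ?thesis using suf_nth assms(1) by metis
    qed
    have "suf S j < suf S k"
    proof (rule less_by_nth[OF qk(2,1)])
      show "\<forall>r<q. suf S j ! r = suf S k ! r" using r1 r2 eqr by simp
      show "suf S j ! q < suf S k ! q" using r1 r2 gt by simp
    qed
    thus ?thesis by auto
  qed
  have nssj: "nss S j = j + d"
    unfolding nss_def
  proof (rule Least_equality)
    show "j + d = length S + 1 \<or> j < j + d \<and> j + d \<le> length S \<and> suf S (j + d) < suf S j"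
      using jd d0 c2 n_def by auto
  next
    fix y assume "y = length S + 1 \<or> j < y \<and> y \<le> length S \<and> suf S y < suf S j"
    thus "j + d \<le> y" using nl[of y] jd n_def by (metis not_le)
  qed
  show ?thesis using c1 nssj unfolding L_def d_def by simp
qed

end
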